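(* Let $q$ be a real-valued query with sensitivity $1$, and let $\mathcal M_q$ be the R$^2$DP Laplace mechanism whose random scale $b$ is such that $1/b$ has moment generating function $M(t)=\mathbb E[e^{t/b}]$. Then $\mathcal M_q$ satisfies $$\Big(\alpha,\ \tfrac{1}{\alpha-1}\log\Big[\tfrac{\alpha M(\alpha-1)+(\alpha-1)M(-\alpha)}{2\alpha-1}\Big]\Big)\text{-RDP if }\alpha>1,$$ and $(1,\ M'(0)+M(-1)-1)$-RDP if $\alpha=1$.
   Context: $\mathrm{Lap}(b)$ is the zero-mean Laplace distribution with density $\frac1{2b}e^{-|x|/b}$; the R$^2$DP Laplace mechanism draws the random scale $b$ (independently of the data) and adds $\mathrm{Lap}(b)$ noise to $q(d)$. Sensitivity is $\max|q(d)-q(d')|$ over datasets $d,d'$ differing in one individual's data. For distributions $P,Q$ with densities $p,q$ the Rényi divergence of order $\alpha>1$ is $D_\alpha(P\|Q)=\frac{1}{\alpha-1}\log\int p(x)^\alpha q(x)^{1-\alpha}dx$, and $D_1$ is the Kullback–Leibler divergence. A mechanism $\mathcal M$ satisfies $(\alpha,\epsilon)$-RDP (Rényi differential privacy) if $D_\alpha(\mathcal M(d)\|\mathcal M(d'))\le\epsilon$ for all adjacent $d,d'$. *)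

theory Defs
  imports "HOL-Probability.Probability"
begin

definition lap_density :: "real \<Rightarrow> real \<Rightarrow> real" where
  "lap_density b x = 1 / (2 * b) * exp (- \<bar>x\<bar> / b)"

text \<open>R2DP Laplace mechanism: the scale b is drawn from the distribution B
  (independently of the data) and Lap(b) noise is added to q d.\<close>
definition r2dp_laplace_density :: "real measure \<Rightarrow> ('d \<Rightarrow> real) \<Rightarrow> 'd \<Rightarrow> real \<Rightarrow> real" where
  "r2dp_laplace_density B q d x = (\<integral>b. lap_density b (x - q d) \<partial>B)"

definition mgf_inv :: "real measure \<Rightarrow> real \<Rightarrow> real" where
  "mgf_inv B t = (\<integral>b. exp (t / b) \<partial>B)"

definition has_sensitivity :: "('d \<Rightarrow> 'd \<Rightarrow> bool) \<Rightarrow> ('d \<Rightarrow> real) \<Rightarrow> real \<Rightarrow> bool" where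
  "has_sensitivity adj q \<Delta> \<longleftrightarrow>
     (\<forall>d d'. adj d d' \<longrightarrow> \<bar>q d - q d'\<bar> \<le> \<Delta>) \<and> (\<exists>d d'. adj d d' \<and> \<bar>q d - q d'\<bar> = \<Delta>)"

definition renyi_div :: "real \<Rightarrow> (real \<Rightarrow> real) \<Rightarrow> (real \<Rightarrow> real) \<Rightarrow> ereal" where
  "renyi_div \<alpha> p q =
     (if \<alpha> = 1 then
        (if integrable lborel (\<lambda>x. p x * ln (p x / q x))
         then ereal (\<integral>x. p x * ln (p x / q x) \<partial>lborel) else \<infinity>)
      else
        (if integrable lborel (\<lambda>x. p x powr \<alpha> * q x powr (1 - \<alpha>))
         then ereal (1 / (\<alpha> - 1) * ln (\<integral>x. p x powr \<alpha> * q x powr (1 - \<alpha>) \<partial>lborel))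
         else \<infinity>))"

definition is_rdp :: "('d \<Rightarrow> 'd \<Rightarrow> bool) \<Rightarrow> ('d \<Rightarrow> real \<Rightarrow> real) \<Rightarrow> real \<Rightarrow> real \<Rightarrow> bool" where
  "is_rdp adj mech \<alpha> \<epsilon> \<longleftrightarrow> (\<forall>d d'. adj d d' \<longrightarrow> renyi_div \<alpha> (mech d) (mech d') \<le> ereal \<epsilon>)"

end

theory Submission
  imports Defs
begin


lemma split3:
  fixes f :: "real \<Rightarrow> ennreal"
  assumes [measurable]: "f \<in> borel_measurable borel" and D: "0 \<le> D"
  shows "(\<integral>\<^sup>+y. f y \<partial>lborel) = (\<integral>\<^sup>+y. f y * indicator {..0} y \<partial>lborel)
     + (\<integral>\<^sup>+y. f y * indicator {0..D} y \<partial>lborel) + (\<integral>\<^sup>+y. f y * indicator {D..} y \<partial>lborel)"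
proof -
  have "(\<integral>\<^sup>+y. f y \<partial>lborel) = (\<integral>\<^sup>+y. f y * indicator {..0} y + f y * indicator {0..D} y
      + f y * indicator {D..} y \<partial>lborel)"
  proof (intro nn_integral_cong_AE)
    show "AE y in lborel. f y = f y * indicator {..0} y + f y * indicator {0..D} y + f y * indicator {D..} y"
      using AE_lborel_singleton[of 0] AE_lborel_singleton[of D]
    proof eventually_elim
      case (elim y)
      then show ?case using D by (cases "y < 0"; cases "y < D") (auto split: split_indicator)
    qed
  qed
  also have "\<dots> = (\<integral>\<^sup>+y. f y * indicator {..0} y \<partial>lborel)
     + (\<integral>\<^sup>+y. f y * indicator {0..D} y \<partial>lborel) + (\<integral>\<^sup>+y. f y * indicator {D..} y \<partial>lborel)"
    by (simp add: nn_integral_add)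
  finally show ?thesis .
qed

lemma reflect_left:
  fixes f :: "real \<Rightarrow> ennreal"
  assumes [measurable]: "f \<in> borel_measurable borel"
  shows "(\<integral>\<^sup>+y. f y * indicator {..0} y \<partial>lborel) = (\<integral>\<^sup>+y. f (- y) * indicator {0..} y \<partial>lborel)"
  using nn_integral_real_affine[of "\<lambda>y. f y * indicator {..0} y" "-1" 0]
  by (simp add: indicator_def)

lemma shift_abs:
  fixes g :: "real \<Rightarrow> real \<Rightarrow> ennreal"
  assumes [measurable]: "(\<lambda>x. g \<bar>x - a\<bar> \<bar>x - c\<bar>) \<in> borel_measurable borel"
  shows "(\<integral>\<^sup>+x. g \<bar>x - a\<bar> \<bar>x - c\<bar> \<partial>lborel) = (\<integral>\<^sup>+y. g \<bar>y\<bar> \<bar>y - \<bar>a - c\<bar>\<bar> \<partial>lborel)"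
proof (cases "a \<le> c")
  case True
  have e: "\<bar>a + 1 * y - a\<bar> = \<bar>y\<bar>" "\<bar>a + 1 * y - c\<bar> = \<bar>y - \<bar>a - c\<bar>\<bar>" for y using True by auto
  show ?thesis
    using nn_integral_real_affine[of "\<lambda>x. g \<bar>x - a\<bar> \<bar>x - c\<bar>" 1 a]
    unfolding e by simp
next
  case False
  have e: "\<bar>a + (-1) * y - a\<bar> = \<bar>y\<bar>" "\<bar>a + (-1) * y - c\<bar> = \<bar>y - \<bar>a - c\<bar>\<bar>" for y using False by auto
  show ?thesis
    using nn_integral_real_affine[of "\<lambda>x. g \<bar>x - a\<bar> \<bar>x - c\<bar>" "-1" a]
    unfolding e by simp
qed

lemma exp_lim0:
  fixes b k :: real assumes b: "0 < b"
  shows "((\<lambda>y. exp (- (y + k) / b)) \<longlongrightarrow> 0) at_top"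
proof -
  have "filterlim (\<lambda>y. k + y) at_top at_top"
    by (rule filterlim_tendsto_add_at_top[OF tendsto_const filterlim_ident])
  then have "filterlim (\<lambda>y. (1/b) * (k + y)) at_top at_top"
    using b by (intro filterlim_tendsto_pos_mult_at_top[OF tendsto_const]) auto
  then have "filterlim (\<lambda>y. - ((1/b) * (k + y))) at_bot at_top"
    by (simp add: filterlim_uminus_at_top[symmetric])
  from filterlim_compose[OF exp_at_bot this]
  have "((\<lambda>y. exp (- ((1/b) * (k + y)))) \<longlongrightarrow> 0) at_top" .
  moreover have "(\<lambda>y. exp (- ((1/b) * (k + y)))) = (\<lambda>y. exp (- (y + k) / b))"
  proof (intro ext arg_cong[where f=exp])
    fix y show "- ((1/b) * (k + y)) = - (y + k) / b" using b by (simp add: field_simps)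
  qed
  ultimately show ?thesis by simp
qed

lemma deriv_helper:
  fixes b c K :: real assumes "c \<noteq> 0" "b \<noteq> 0"
  shows "((\<lambda>y. - exp ((K - c * y) / b) / (2 * c)) has_real_derivative exp ((K - c * y) / b) / (2 * b)) (at y)"
  using assms by (auto intro!: derivative_eq_intros simp: field_simps)

lemma alg_helper:
  fixes c X Y :: real assumes "c \<noteq> 0"
  shows "X / 2 + (X - Y) / (2 * c) + Y / 2 = ((c + 1) / 2) / c * X + ((c + 1) / 2 - 1) / c * Y"
  using assms by (simp add: field_simps)

lemma alpha_core:
  fixes b \<alpha> D :: real assumes b: "0 < b" and al: "1 < \<alpha>" and D: "0 \<le> D"
  shows "(\<integral>\<^sup>+y. ennreal (exp (- (\<alpha> * \<bar>y\<bar> - (\<alpha> - 1) * \<bar>y - D\<bar>) / b) / (2 * b)) \<partial>lborel)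
     = ennreal (\<alpha> / (2 * \<alpha> - 1) * exp ((\<alpha> - 1) * D / b) + (\<alpha> - 1) / (2 * \<alpha> - 1) * exp (- \<alpha> * D / b))"
    (is "(\<integral>\<^sup>+y. ?f y \<partial>lborel) = _")
proof -
  have [measurable]: "?f \<in> borel_measurable borel" by measurable
  have R: "(\<integral>\<^sup>+y. ?f y * indicator {D..} y \<partial>lborel) = ennreal (exp (- \<alpha> * D / b) / 2)"
  proof -
    have "(\<integral>\<^sup>+y. ?f y * indicator {D..} y \<partial>lborel)
        = (\<integral>\<^sup>+y. ennreal (exp (- (y + (\<alpha> - 1) * D) / b) / (2 * b)) * indicator {D..} y \<partial>lborel)"
    proof (intro nn_integral_cong)
      fix y :: real
      show "?f y * indicator {D..} y = ennreal (exp (- (y + (\<alpha> - 1) * D) / b) / (2 * b)) * indicator {D..} y"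
      proof (cases "D \<le> y")
        case True
        then have "\<alpha> * \<bar>y\<bar> - (\<alpha> - 1) * \<bar>y - D\<bar> = y + (\<alpha> - 1) * D" using D
          by (simp add: algebra_simps)
        then show ?thesis by simp
      qed simp
    qed
    also have "\<dots> = ennreal (0 - (- exp (- (D + (\<alpha> - 1) * D) / b) / 2))"
    proof (rule nn_integral_FTC_atLeast[where F="\<lambda>y. - exp (- (y + (\<alpha> - 1) * D) / b) / 2"])
      show "(\<lambda>y. exp (- (y + (\<alpha> - 1) * D) / b) / (2 * b)) \<in> borel_measurable borel" by measurable
      show "((\<lambda>y. - exp (- (y + (\<alpha> - 1) * D) / b) / 2) has_real_derivative exp (- (y + (\<alpha> - 1) * D) / b) / (2 * b)) (at y)" if "D \<le> y" for y
        using b by (auto intro!: derivative_eq_intros simp: field_simps)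
      show "0 \<le> exp (- (y + (\<alpha> - 1) * D) / b) / (2 * b)" if "D \<le> y" for y using b by simp
      show "((\<lambda>y. - exp (- (y + (\<alpha> - 1) * D) / b) / 2) \<longlongrightarrow> 0) at_top"
        using tendsto_divide[OF tendsto_minus[OF exp_lim0[OF b, of "(\<alpha> - 1) * D"]] tendsto_const[of 2]] by simp
    qed
    also have "- (D + (\<alpha> - 1) * D) / b = - \<alpha> * D / b" by (simp add: algebra_simps)
    finally show ?thesis by simp
  qed
  have M: "(\<integral>\<^sup>+y. ?f y * indicator {0..D} y \<partial>lborel)
      = ennreal ((exp ((\<alpha> - 1) * D / b) - exp (- \<alpha> * D / b)) / (2 * (2 * \<alpha> - 1)))"
  proof -
    have "(\<integral>\<^sup>+y. ?f y * indicator {0..D} y \<partial>lborel)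
        = (\<integral>\<^sup>+y. ennreal (exp (((\<alpha> - 1) * D - (2 * \<alpha> - 1) * y) / b) / (2 * b)) * indicator {0..D} y \<partial>lborel)"
    proof (intro nn_integral_cong)
      fix y :: real
      show "?f y * indicator {0..D} y = ennreal (exp (((\<alpha> - 1) * D - (2 * \<alpha> - 1) * y) / b) / (2 * b)) * indicator {0..D} y"
      proof (cases "0 \<le> y \<and> y \<le> D")
        case True
        then have "- (\<alpha> * \<bar>y\<bar> - (\<alpha> - 1) * \<bar>y - D\<bar>) = (\<alpha> - 1) * D - (2 * \<alpha> - 1) * y"
          by (simp add: algebra_simps)
        then show ?thesis using True by simp
      qed auto
    qed
    also have "\<dots> = ennreal ((- exp (((\<alpha> - 1) * D - (2 * \<alpha> - 1) * D) / b) / (2 * (2 * \<alpha> - 1)))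
                         - (- exp (((\<alpha> - 1) * D - (2 * \<alpha> - 1) * 0) / b) / (2 * (2 * \<alpha> - 1))))"
    proof (rule nn_integral_FTC_Icc[where F="\<lambda>y. - exp (((\<alpha> - 1) * D - (2 * \<alpha> - 1) * y) / b) / (2 * (2 * \<alpha> - 1))"])
      show "(\<lambda>y. exp (((\<alpha> - 1) * D - (2 * \<alpha> - 1) * y) / b) / (2 * b)) \<in> borel_measurable borel" by measurable
      show "((\<lambda>y. - exp (((\<alpha> - 1) * D - (2 * \<alpha> - 1) * y) / b) / (2 * (2 * \<alpha> - 1))) has_real_derivative
             exp (((\<alpha> - 1) * D - (2 * \<alpha> - 1) * y) / b) / (2 * b)) (at y)" if "y \<in> {0..D}" for y
        using b al by (intro deriv_helper) auto
      show "0 \<le> exp (((\<alpha> - 1) * D - (2 * \<alpha> - 1) * y) / b) / (2 * b)" if "y \<in> {0..D}" for y using b by simp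
    qed (use D in auto)
    also have "((\<alpha> - 1) * D - (2 * \<alpha> - 1) * D) / b = - \<alpha> * D / b" by (simp add: algebra_simps)
    finally show ?thesis by (simp add: diff_divide_distrib)
  qed
  have L: "(\<integral>\<^sup>+y. ?f y * indicator {..0} y \<partial>lborel) = ennreal (exp ((\<alpha> - 1) * D / b) / 2)"
  proof -
    have "(\<integral>\<^sup>+y. ?f y * indicator {..0} y \<partial>lborel) = (\<integral>\<^sup>+y. ?f (- y) * indicator {0..} y \<partial>lborel)"
      by (rule reflect_left) measurable
    also have "\<dots> = (\<integral>\<^sup>+y. ennreal (exp (- (y + - ((\<alpha> - 1) * D)) / b) / (2 * b)) * indicator {0..} y \<partial>lborel)"
    proof (intro nn_integral_cong)
      fix y :: real
      show "?f (- y) * indicator {0..} y = ennreal (exp (- (y + - ((\<alpha> - 1) * D)) / b) / (2 * b)) * indicator {0..} y"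
      proof (cases "0 \<le> y")
        case True
        then have "\<alpha> * \<bar>- y\<bar> - (\<alpha> - 1) * \<bar>- y - D\<bar> = y + - ((\<alpha> - 1) * D)" using D
          by (simp add: algebra_simps)
        then show ?thesis by simp
      qed simp
    qed
    also have "\<dots> = ennreal (0 - (- exp (- (0 + - ((\<alpha> - 1) * D)) / b) / 2))"
    proof (rule nn_integral_FTC_atLeast[where F="\<lambda>y. - exp (- (y + - ((\<alpha> - 1) * D)) / b) / 2"])
      show "(\<lambda>y. exp (- (y + - ((\<alpha> - 1) * D)) / b) / (2 * b)) \<in> borel_measurable borel" by measurable
      show "((\<lambda>y. - exp (- (y + - ((\<alpha> - 1) * D)) / b) / 2) has_real_derivative exp (- (y + - ((\<alpha> - 1) * D)) / b) / (2 * b)) (at y)" if "0 \<le> y" for y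
        using b by (auto intro!: derivative_eq_intros simp: field_simps)
      show "0 \<le> exp (- (y + - ((\<alpha> - 1) * D)) / b) / (2 * b)" if "0 \<le> y" for y using b by simp
      show "((\<lambda>y. - exp (- (y + - ((\<alpha> - 1) * D)) / b) / 2) \<longlongrightarrow> 0) at_top"
        using tendsto_divide[OF tendsto_minus[OF exp_lim0[OF b, of "- ((\<alpha> - 1) * D)"]] tendsto_const[of 2]] by simp
    qed
    finally show ?thesis by simp
  qed
  have "(\<integral>\<^sup>+y. ?f y \<partial>lborel) = ennreal (exp ((\<alpha> - 1) * D / b) / 2)
      + ennreal ((exp ((\<alpha> - 1) * D / b) - exp (- \<alpha> * D / b)) / (2 * (2 * \<alpha> - 1)))
      + ennreal (exp (- \<alpha> * D / b) / 2)"
    using split3[of ?f D] D L M R by simp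
  also have "\<dots> = ennreal (exp ((\<alpha> - 1) * D / b) / 2
      + (exp ((\<alpha> - 1) * D / b) - exp (- \<alpha> * D / b)) / (2 * (2 * \<alpha> - 1))
      + exp (- \<alpha> * D / b) / 2)"
  proof -
    have "- \<alpha> * D \<le> (\<alpha> - 1) * D" using al D by (intro mult_right_mono) auto
    then have "- \<alpha> * D / b \<le> (\<alpha> - 1) * D / b" using b by (intro divide_right_mono) auto
    then have "exp (- \<alpha> * D / b) \<le> exp ((\<alpha> - 1) * D / b)" by simp
    then have "0 \<le> (exp ((\<alpha> - 1) * D / b) - exp (- \<alpha> * D / b)) / (2 * (2 * \<alpha> - 1))"
      using al by simp
    then show ?thesis by (simp add: ennreal_plus[symmetric] del: ennreal_plus)
  qed
  also have "exp ((\<alpha> - 1) * D / b) / 2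
      + (exp ((\<alpha> - 1) * D / b) - exp (- \<alpha> * D / b)) / (2 * (2 * \<alpha> - 1))
      + exp (- \<alpha> * D / b) / 2
      = \<alpha> / (2 * \<alpha> - 1) * exp ((\<alpha> - 1) * D / b) + (\<alpha> - 1) / (2 * \<alpha> - 1) * exp (- \<alpha> * D / b)"
    using alg_helper[of "2 * \<alpha> - 1" "exp ((\<alpha> - 1) * D / b)" "exp (- \<alpha> * D / b)"] al by simp
  finally show ?thesis .
qed

lemma kl_nonneg:
  fixes b s t :: real assumes b: "0 < b"
  shows "0 \<le> exp (- s / b) / (2 * b) * ((t - s) / b) - exp (- s / b) / (2 * b) + exp (- t / b) / (2 * b)"
proof -
  have "exp (- t / b) = exp (- s / b) * exp ((s - t) / b)"
    by (simp add: exp_add[symmetric] diff_divide_distrib)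
  also have "\<dots> \<ge> exp (- s / b) * (1 + (s - t) / b)"
    by (intro mult_left_mono exp_ge_add_one_self) auto
  finally have "exp (- t / b) \<ge> exp (- s / b) * (1 + (s - t) / b)" .
  then have "exp (- t / b) / (2 * b) \<ge> exp (- s / b) * (1 + (s - t) / b) / (2 * b)"
    using b by (intro divide_right_mono) auto
  moreover have "exp (- s / b) * (1 + (s - t) / b) / (2 * b)
      = - (exp (- s / b) / (2 * b) * ((t - s) / b) - exp (- s / b) / (2 * b))"
    using b by (simp add: field_simps)
  ultimately show ?thesis by linarith
qed

lemma lin_helper:
  fixes F a e x :: real
  shows "F = - a / 2 - e / 2 \<Longrightarrow> 1 + - x \<le> e \<Longrightarrow> a = x - 1 \<Longrightarrow> 0 \<le> 0 - F"
  by (simp add: field_simps)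

lemma kl_core:
  fixes b D :: real assumes b: "0 < b" and D: "0 \<le> D"
  shows "(\<integral>\<^sup>+y. ennreal (exp (- \<bar>y\<bar> / b) / (2 * b) * ((\<bar>y - D\<bar> - \<bar>y\<bar>) / b)
            - exp (- \<bar>y\<bar> / b) / (2 * b) + exp (- \<bar>y - D\<bar> / b) / (2 * b)) \<partial>lborel)
     = ennreal (D / b + exp (- D / b) - 1)"
proof -
  define h where "h y = exp (- \<bar>y\<bar> / b) / (2 * b) * ((\<bar>y - D\<bar> - \<bar>y\<bar>) / b)
            - exp (- \<bar>y\<bar> / b) / (2 * b) + exp (- \<bar>y - D\<bar> / b) / (2 * b)" for y
  have hnn: "0 \<le> h y" for y unfolding h_def using kl_nonneg[OF b] by blast
  have [measurable]: "h \<in> borel_measurable borel" unfolding h_def by measurable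
  define gR where "gR y = exp (- (y + 0) / b) * (- (D / b) - 1) / (2 * b) + exp (- (y + - D) / b) / (2 * b)" for y
  define FR where "FR y = exp (- (y + 0) / b) * (D / b + 1) / 2 - exp (- (y + - D) / b) / 2" for y
  have eqR: "h y = gR y" if "D \<le> y" for y
  proof -
    have "\<bar>y\<bar> = y" "\<bar>y - D\<bar> = y - D" using that D by auto
    then show ?thesis unfolding h_def gR_def using b by (simp add: field_simps)
  qed
  have R: "(\<integral>\<^sup>+y. ennreal (h y) * indicator {D..} y \<partial>lborel) = ennreal (0 - FR D)"
  proof -
    have "(\<integral>\<^sup>+y. ennreal (h y) * indicator {D..} y \<partial>lborel) = (\<integral>\<^sup>+y. ennreal (gR y) * indicator {D..} y \<partial>lborel)"
      by (intro nn_integral_cong) (auto simp: eqR split: split_indicator)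
    also have "\<dots> = ennreal (0 - FR D)"
    proof (rule nn_integral_FTC_atLeast[where F=FR])
      show "gR \<in> borel_measurable borel" unfolding gR_def by measurable
      show "(FR has_real_derivative gR y) (at y)" if "D \<le> y" for y
        unfolding FR_def gR_def using b by (auto intro!: derivative_eq_intros simp: field_simps)
      show "0 \<le> gR y" if "D \<le> y" for y using eqR[OF that] hnn[of y] by simp
      show "(FR \<longlongrightarrow> 0) at_top" unfolding FR_def
        using tendsto_diff[OF tendsto_divide[OF tendsto_mult[OF exp_lim0[OF b, of 0] tendsto_const[of "D / b + 1"]] tendsto_const[of 2]]
                              tendsto_divide[OF exp_lim0[OF b, of "- D"] tendsto_const[of 2]]] by simp
    qed
    finally show ?thesis .
  qed
  define gM where "gM y = exp (- y / b) * ((D - 2 * y) / (2 * b * b) - 1 / (2 * b)) + exp ((y - D) / b) / (2 * b)" for y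
  define FM where "FM y = exp (- y / b) * (3 / 2 - D / (2 * b) + y / b) + exp ((y - D) / b) / 2" for y
  have eqM: "h y = gM y" if "0 \<le> y" "y \<le> D" for y
  proof -
    have "\<bar>y\<bar> = y" "\<bar>y - D\<bar> = D - y" using that D by auto
    moreover have "- (D - y) / b = (y - D) / b" by (simp add: field_simps)
    ultimately show ?thesis unfolding h_def gM_def using b by (simp add: field_simps)
  qed
  have dM: "(FM has_real_derivative gM y) (at y)" for y
    unfolding FM_def gM_def using b by (auto intro!: derivative_eq_intros simp: field_simps)
  have M: "(\<integral>\<^sup>+y. ennreal (h y) * indicator {0..D} y \<partial>lborel) = ennreal (FM D - FM 0)"
  proof -
    have "(\<integral>\<^sup>+y. ennreal (h y) * indicator {0..D} y \<partial>lborel) = (\<integral>\<^sup>+y. ennreal (gM y) * indicator {0..D} y \<partial>lborel)"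
      by (intro nn_integral_cong) (auto simp: eqM split: split_indicator)
    also have "\<dots> = ennreal (FM D - FM 0)"
    proof (rule nn_integral_FTC_Icc[where F=FM])
      show "gM \<in> borel_measurable borel" unfolding gM_def by measurable
      show "(FM has_real_derivative gM y) (at y)" if "y \<in> {0..D}" for y by (rule dM)
      show "0 \<le> gM y" if "y \<in> {0..D}" for y using eqM[of y] that hnn[of y] by simp
    qed (use D in auto)
    finally show ?thesis .
  qed
  have Mnn: "FM 0 \<le> FM D"
    by (rule DERIV_nonneg_imp_nondecreasing[OF D]) (use dM eqM hnn in metis)
  define gL where "gL y = exp (- (y + 0) / b) * (D / b - 1) / (2 * b) + exp (- (y + D) / b) / (2 * b)" for y
  define FL where "FL y = - exp (- (y + 0) / b) * (D / b - 1) / 2 - exp (- (y + D) / b) / 2" for y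
  have eqL: "h (- y) = gL y" if "0 \<le> y" for y
  proof -
    have "\<bar>- y\<bar> = y" "\<bar>- y - D\<bar> = y + D" using that D by auto
    then show ?thesis unfolding h_def gL_def using b by (simp add: field_simps)
  qed
  have L: "(\<integral>\<^sup>+y. ennreal (h y) * indicator {..0} y \<partial>lborel) = ennreal (0 - FL 0)"
  proof -
    have "(\<integral>\<^sup>+y. ennreal (h y) * indicator {..0} y \<partial>lborel) = (\<integral>\<^sup>+y. ennreal (h (- y)) * indicator {0..} y \<partial>lborel)"
      by (rule reflect_left) measurable
    also have "\<dots> = (\<integral>\<^sup>+y. ennreal (gL y) * indicator {0..} y \<partial>lborel)"
      by (intro nn_integral_cong) (auto simp: eqL split: split_indicator)
    also have "\<dots> = ennreal (0 - FL 0)"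
    proof (rule nn_integral_FTC_atLeast[where F=FL])
      show "gL \<in> borel_measurable borel" unfolding gL_def by measurable
      show "(FL has_real_derivative gL y) (at y)" if "0 \<le> y" for y
        unfolding FL_def gL_def using b by (auto intro!: derivative_eq_intros simp: field_simps)
      show "0 \<le> gL y" if "0 \<le> y" for y using eqL[OF that] hnn[of "- y"] by simp
      show "(FL \<longlongrightarrow> 0) at_top" unfolding FL_def
        using tendsto_diff[OF tendsto_divide[OF tendsto_mult[OF tendsto_minus[OF exp_lim0[OF b, of 0]] tendsto_const[of "D / b - 1"]] tendsto_const[of 2]]
                              tendsto_divide[OF exp_lim0[OF b, of "D"] tendsto_const[of 2]]] by simp
    qed
    finally show ?thesis .
  qed
  have Rnn: "0 \<le> 0 - FR D"
  proof -
    have "1 + D / b \<le> exp (D / b)" by (rule exp_ge_add_one_self)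
    then have "exp (- D / b) * (1 + D / b) \<le> exp (- D / b) * exp (D / b)" by (intro mult_left_mono) auto
    also have "\<dots> = 1" by (simp add: exp_add[symmetric])
    finally have "exp (- D / b) * (1 + D / b) \<le> 1" .
    moreover have "FR D = (exp (- D / b) * (1 + D / b) - 1) / 2"
      unfolding FR_def by (simp add: algebra_simps)
    ultimately show ?thesis by simp
  qed
  have Lnn: "0 \<le> 0 - FL 0"
  proof -
    have "1 + (- (D / b)) \<le> exp (- (D / b))" by (rule exp_ge_add_one_self)
    moreover have "FL 0 = - (D / b - 1) / 2 - exp (- (D / b)) / 2"
      unfolding FL_def by (simp add: algebra_simps)
    ultimately show ?thesis using lin_helper[of "FL 0" "D / b - 1" "exp (- (D / b))" "D / b"] by simp
  qed
  have "(\<integral>\<^sup>+y. ennreal (h y) \<partial>lborel) = ennreal (0 - FL 0) + ennreal (FM D - FM 0) + ennreal (0 - FR D)"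
    using split3[of "\<lambda>y. ennreal (h y)" D] D L M R by simp
  also have "\<dots> = ennreal ((0 - FL 0) + (FM D - FM 0) + (0 - FR D))"
    using Lnn Mnn Rnn by (simp add: ennreal_plus[symmetric] del: ennreal_plus)
  also have "(0 - FL 0) + (FM D - FM 0) + (0 - FR D) = D / b + exp (- D / b) - 1"
    unfolding FL_def FM_def FR_def using b by (simp add: field_simps)
  finally show ?thesis unfolding h_def .
qed

lemma lap_powr_prod:
  fixes b \<alpha> s t :: real assumes b: "0 < b"
  shows "lap_density b s powr \<alpha> * lap_density b t powr (1 - \<alpha>)
       = exp (- (\<alpha> * \<bar>s\<bar> - (\<alpha> - 1) * \<bar>t\<bar>) / b) / (2 * b)"
proof -
  have K: "0 < 1 / (2 * b)" using b by simp
  have "lap_density b s powr \<alpha> * lap_density b t powr (1 - \<alpha>)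
      = ((1 / (2 * b)) powr \<alpha> * (1 / (2 * b)) powr (1 - \<alpha>)) * (exp (- \<bar>s\<bar> / b * \<alpha>) * exp (- \<bar>t\<bar> / b * (1 - \<alpha>)))"
    unfolding lap_density_def by (simp only: powr_mult exp_powr_real mult_ac)
  also have "(1 / (2 * b)) powr \<alpha> * (1 / (2 * b)) powr (1 - \<alpha>) = 1 / (2 * b)"
    using K by (simp add: powr_add[symmetric])
  also have "exp (- \<bar>s\<bar> / b * \<alpha>) * exp (- \<bar>t\<bar> / b * (1 - \<alpha>)) = exp (- (\<alpha> * \<bar>s\<bar> - (\<alpha> - 1) * \<bar>t\<bar>) / b)"
    unfolding exp_add[symmetric] using b by (simp add: field_simps)
  finally show ?thesis by simp
qed

lemma lap_alpha:
  fixes b \<alpha> a c :: real assumes b: "0 < b" and al: "1 < \<alpha>"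
  shows "(\<integral>\<^sup>+x. ennreal (lap_density b (x - a) powr \<alpha> * lap_density b (x - c) powr (1 - \<alpha>)) \<partial>lborel)
     = ennreal (\<alpha> / (2 * \<alpha> - 1) * exp ((\<alpha> - 1) * \<bar>a - c\<bar> / b) + (\<alpha> - 1) / (2 * \<alpha> - 1) * exp (- \<alpha> * \<bar>a - c\<bar> / b))"
proof -
  let ?g = "\<lambda>u v. ennreal (exp (- (\<alpha> * u - (\<alpha> - 1) * v) / b) / (2 * b))"
  have "(\<integral>\<^sup>+x. ennreal (lap_density b (x - a) powr \<alpha> * lap_density b (x - c) powr (1 - \<alpha>)) \<partial>lborel)
      = (\<integral>\<^sup>+x. ?g \<bar>x - a\<bar> \<bar>x - c\<bar> \<partial>lborel)"
    using lap_powr_prod[OF b] by simp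
  also have "\<dots> = (\<integral>\<^sup>+y. ?g \<bar>y\<bar> \<bar>y - \<bar>a - c\<bar>\<bar> \<partial>lborel)"
    by (rule shift_abs) measurable
  also note alpha_core[OF b al abs_ge_zero]
  finally show ?thesis .
qed

lemma lap_mass:
  fixes b a :: real assumes b: "0 < b"
  shows "(\<integral>\<^sup>+x. ennreal (lap_density b (x - a)) \<partial>lborel) = 1"
proof -
  have "lap_density b (x - a) = lap_density b (x - a) powr 2 * lap_density b (x - a) powr (1 - 2)" for x
  proof -
    have "0 < lap_density b (x - a)" unfolding lap_density_def using b by simp
    then show ?thesis by (subst powr_add[symmetric]) simp
  qed
  then have "(\<integral>\<^sup>+x. ennreal (lap_density b (x - a)) \<partial>lborel)
     = (\<integral>\<^sup>+x. ennreal (lap_density b (x - a) powr 2 * lap_density b (x - a) powr (1 - 2)) \<partial>lborel)"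
    by simp
  also have "\<dots> = 1"
    using lap_alpha[OF b, of 2 a a] by simp
  finally show ?thesis .
qed

lemma lap_kl:
  fixes b a c :: real assumes b: "0 < b"
  shows "(\<integral>\<^sup>+x. ennreal (lap_density b (x - a) * ln (lap_density b (x - a) / lap_density b (x - c))
              - lap_density b (x - a) + lap_density b (x - c)) \<partial>lborel)
     = ennreal (\<bar>a - c\<bar> / b + exp (- \<bar>a - c\<bar> / b) - 1)"
proof -
  let ?g = "\<lambda>u v. ennreal (exp (- u / b) / (2 * b) * ((v - u) / b) - exp (- u / b) / (2 * b) + exp (- v / b) / (2 * b))"
  have e: "ln (lap_density b s / lap_density b t) = (\<bar>t\<bar> - \<bar>s\<bar>) / b" for s t
  proof -
    have "lap_density b s / lap_density b t = exp ((\<bar>t\<bar> - \<bar>s\<bar>) / b)"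
      unfolding lap_density_def using b by (simp add: exp_diff[symmetric] diff_divide_distrib)
    then show ?thesis by simp
  qed
  have "(\<integral>\<^sup>+x. ennreal (lap_density b (x - a) * ln (lap_density b (x - a) / lap_density b (x - c))
              - lap_density b (x - a) + lap_density b (x - c)) \<partial>lborel)
      = (\<integral>\<^sup>+x. ?g \<bar>x - a\<bar> \<bar>x - c\<bar> \<partial>lborel)"
    unfolding e by (simp add: lap_density_def)
  also have "\<dots> = (\<integral>\<^sup>+y. ?g \<bar>y\<bar> \<bar>y - \<bar>a - c\<bar>\<bar> \<partial>lborel)"
    by (rule shift_abs) measurable
  also note kl_core[OF b abs_ge_zero]
  finally show ?thesis .
qed

lemma lap_pos: "0 < b \<Longrightarrow> 0 < lap_density b y"
  unfolding lap_density_def by simp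

lemma lap_meas[measurable]: "(\<lambda>(x, b). lap_density b (x - a)) \<in> borel_measurable (borel \<Otimes>\<^sub>M borel)"
  unfolding lap_density_def by measurable

lemma powr_tangent:
  fixes \<alpha> r z :: real
  assumes a: "1 \<le> \<alpha>" and r: "0 < r" and z: "0 < z"
  shows "r powr \<alpha> + \<alpha> * r powr (\<alpha> - 1) * (z - r) \<le> z powr \<alpha>"
proof -
  have "\<alpha> * r powr (\<alpha> - 1) * (z - r) \<le> z powr \<alpha> - r powr \<alpha>"
  proof (rule convex_on_imp_above_tangent[OF powr_convex[OF a]])
    show "connected {0::real<..}" by simp
    show "r \<in> interior {0<..}" using r by (simp add: interior_open)
    show "z \<in> {0<..}" using z by simp
    show "((\<lambda>x. x powr \<alpha>) has_real_derivative \<alpha> * r powr (\<alpha> - 1)) (at r within {0<..})"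
      using r by (auto intro!: derivative_eq_intros)
  qed
  then show ?thesis by simp
qed

lemma kl_elem:
  fixes u v :: real assumes u: "0 < u" and v: "0 < v"
  shows "0 \<le> u * ln (u / v) - u + v"
proof -
  have "ln (v / u) \<le> v / u - 1" using u v by (intro ln_le_minus_one) auto
  moreover have "ln (u / v) = - ln (v / u)" using u v by (simp add: ln_div)
  ultimately have "1 - v / u \<le> ln (u / v)" by simp
  then have "u * (1 - v / u) \<le> u * ln (u / v)" using u by (intro mult_left_mono) auto
  moreover have "u * (1 - v / u) = u - v" using u by (simp add: field_simps)
  ultimately show ?thesis by linarith
qed

lemma mix_powr:
  fixes M :: "'b measure" and f g :: "'b \<Rightarrow> real" and \<alpha> :: real
  assumes a: "1 \<le> \<alpha>" and fi: "integrable M f" and gi: "integrable M g"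
    and hi: "integrable M (\<lambda>b. f b powr \<alpha> * g b powr (1 - \<alpha>))"
    and fp: "AE b in M. 0 < f b" and gp: "AE b in M. 0 < g b"
    and F: "0 < integral\<^sup>L M f" and G: "0 < integral\<^sup>L M g"
  shows "(integral\<^sup>L M f) powr \<alpha> * (integral\<^sup>L M g) powr (1 - \<alpha>) \<le> (\<integral>b. f b powr \<alpha> * g b powr (1 - \<alpha>) \<partial>M)"
proof -
  define r where "r = integral\<^sup>L M f / integral\<^sup>L M g"
  have r: "0 < r" using F G by (simp add: r_def)
  have pt: "AE b in M. r powr \<alpha> * g b + \<alpha> * r powr (\<alpha> - 1) * (f b - r * g b) \<le> f b powr \<alpha> * g b powr (1 - \<alpha>)"
    using fp gp
  proof eventually_elim
    case (elim b)
    have t: "r powr \<alpha> + \<alpha> * r powr (\<alpha> - 1) * (f b / g b - r) \<le> (f b / g b) powr \<alpha>"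
      using powr_tangent[OF a r, of "f b / g b"] elim by simp
    have "g b * (r powr \<alpha> + \<alpha> * r powr (\<alpha> - 1) * (f b / g b - r)) \<le> g b * (f b / g b) powr \<alpha>"
      using t elim by (intro mult_left_mono) auto
    moreover have "g b * (r powr \<alpha> + \<alpha> * r powr (\<alpha> - 1) * (f b / g b - r))
        = r powr \<alpha> * g b + \<alpha> * r powr (\<alpha> - 1) * (f b - r * g b)"
      using elim by (simp add: field_simps)
    moreover have "g b * (f b / g b) powr \<alpha> = f b powr \<alpha> * g b powr (1 - \<alpha>)"
      using elim by (simp add: powr_divide powr_diff field_simps)
    ultimately show ?case by simp
  qed
  have "(\<integral>b. r powr \<alpha> * g b + \<alpha> * r powr (\<alpha> - 1) * (f b - r * g b) \<partial>M) \<le> (\<integral>b. f b powr \<alpha> * g b powr (1 - \<alpha>) \<partial>M)"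
    using pt fi gi hi by (intro integral_mono_AE) auto
  moreover have "(\<integral>b. r powr \<alpha> * g b + \<alpha> * r powr (\<alpha> - 1) * (f b - r * g b) \<partial>M)
      = r powr \<alpha> * integral\<^sup>L M g + \<alpha> * r powr (\<alpha> - 1) * (integral\<^sup>L M f - r * integral\<^sup>L M g)"
    using fi gi by simp
  moreover have "integral\<^sup>L M f - r * integral\<^sup>L M g = 0" using G by (simp add: r_def)
  moreover have "r powr \<alpha> * integral\<^sup>L M g = (integral\<^sup>L M f) powr \<alpha> * (integral\<^sup>L M g) powr (1 - \<alpha>)"
    using F G by (simp add: r_def powr_divide powr_diff field_simps)
  ultimately show ?thesis by simp
qed

lemma mix_kl:
  fixes M :: "'b measure" and f g :: "'b \<Rightarrow> real"
  assumes fi: "integrable M f" and gi: "integrable M g"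
    and hi: "integrable M (\<lambda>b. f b * ln (f b / g b))"
    and fp: "AE b in M. 0 < f b" and gp: "AE b in M. 0 < g b"
    and F: "0 < integral\<^sup>L M f" and G: "0 < integral\<^sup>L M g"
  shows "integral\<^sup>L M f * ln (integral\<^sup>L M f / integral\<^sup>L M g) \<le> (\<integral>b. f b * ln (f b / g b) \<partial>M)"
proof -
  define r where "r = integral\<^sup>L M f / integral\<^sup>L M g"
  have r: "0 < r" using F G by (simp add: r_def)
  have pt: "AE b in M. f b * ln r + f b - r * g b \<le> f b * ln (f b / g b)"
    using fp gp
  proof eventually_elim
    case (elim b)
    have "0 \<le> f b * ln (f b / (r * g b)) - f b + r * g b"
      using elim r by (intro kl_elem) auto
    moreover have "ln (f b / (r * g b)) = ln (f b / g b) - ln r"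
      using elim r by (simp add: ln_div ln_mult)
    ultimately show ?case by (simp add: algebra_simps)
  qed
  have "(\<integral>b. f b * ln r + f b - r * g b \<partial>M) \<le> (\<integral>b. f b * ln (f b / g b) \<partial>M)"
    using pt fi gi hi by (intro integral_mono_AE) auto
  moreover have "(\<integral>b. f b * ln r + f b - r * g b \<partial>M)
      = integral\<^sup>L M f * ln r + integral\<^sup>L M f - r * integral\<^sup>L M g"
    using fi gi by simp
  moreover have "integral\<^sup>L M f - r * integral\<^sup>L M g = 0" using G by (simp add: r_def)
  ultimately show ?thesis by (simp add: r_def)
qed

locale mixB =
  fixes B :: "real measure"
  assumes PS: "prob_space B" and SB: "sets B = sets borel" and POS: "AE b in B. 0 < b"
    and MGF: "\<exists>\<delta>>0. \<forall>t. \<bar>t\<bar> < \<delta> \<longrightarrow> integrable B (\<lambda>b. exp (t / b))"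
begin

lemma meas_B: "f \<in> borel_measurable borel \<Longrightarrow> f \<in> borel_measurable B"
  by (simp add: measurable_cong_sets[OF SB refl])

lemma meas_pair: "f \<in> borel_measurable (borel \<Otimes>\<^sub>M borel) \<Longrightarrow> f \<in> borel_measurable (lborel \<Otimes>\<^sub>M B)"
  by (simp add: measurable_cong_sets[OF sets_pair_measure_cong[OF sets_lborel SB] refl])

lemma inv_integrable: "integrable B (\<lambda>b. 1 / b)"
proof -
  obtain \<delta> where \<delta>: "\<delta> > 0" "\<And>t. \<bar>t\<bar> < \<delta> \<Longrightarrow> integrable B (\<lambda>b. exp (t / b))" using MGF by auto
  define t where "t = \<delta> / 2"
  have t: "0 < t" "\<bar>t\<bar> < \<delta>" using \<delta> by (auto simp: t_def)
  have "integrable B (\<lambda>b. exp (t / b) / t)" using \<delta>(2)[OF t(2)] by simp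
  then show ?thesis
  proof (rule Bochner_Integration.integrable_bound)
    show "(\<lambda>b. 1 / b) \<in> borel_measurable B" by (rule meas_B) measurable
    show "AE b in B. norm (1 / b) \<le> norm (exp (t / b) / t)"
      using POS
    proof eventually_elim
      case (elim b)
      have "t / b \<le> exp (t / b)" using exp_ge_add_one_self[of "t / b"] by linarith
      then have "1 / b \<le> exp (t / b) / t" using t elim by (simp add: field_simps)
      then show ?case using elim t by simp
    qed
  qed
qed

lemma lap_integrable: "integrable B (\<lambda>b. lap_density b y)"
  using inv_integrable
proof (rule Bochner_Integration.integrable_bound)
  show "(\<lambda>b. lap_density b y) \<in> borel_measurable B" unfolding lap_density_def by (rule meas_B) measurable
  show "AE b in B. norm (lap_density b y) \<le> norm (1 / b)"
    using POS
  proof eventually_elim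
    case (elim b)
    have "exp (- \<bar>y\<bar> / b) \<le> 1" using elim by simp
    then have "1 / (2 * b) * exp (- \<bar>y\<bar> / b) \<le> 1 / (2 * b) * 1" using elim by (intro mult_left_mono) auto
    moreover have "1 / (2 * b) \<le> 1 / b" using elim by (simp add: field_simps)
    ultimately have "lap_density b y \<le> 1 / b" unfolding lap_density_def by linarith
    then show ?case using lap_pos[OF elim, of y] elim by simp
  qed
qed

lemma pos_integral:
  fixes f :: "real \<Rightarrow> real"
  assumes "integrable B f" "AE b in B. 0 < f b"
  shows "0 < integral\<^sup>L B f"
proof -
  interpret prob_space B by (rule PS)
  have nn: "AE b in B. 0 \<le> f b" using assms(2) by (auto elim: eventually_mono)
  have "0 \<le> integral\<^sup>L B f" using nn by (rule integral_nonneg_AE)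
  moreover have "integral\<^sup>L B f \<noteq> 0"
  proof
    assume "integral\<^sup>L B f = 0"
    then have "AE b in B. f b = 0" using integral_nonneg_eq_0_iff_AE[OF assms(1) nn] by simp
    with assms(2) have "AE b in B. False" by eventually_elim simp
    then show False by simp
  qed
  ultimately show ?thesis by simp
qed

lemma P_pos: "0 < (\<integral>b. lap_density b y \<partial>B)"
  by (rule pos_integral[OF lap_integrable]) (use POS lap_pos in auto)

end




lemma J_mono:
  fixes \<alpha> b D :: real assumes al: "1 < \<alpha>" and b: "0 < b" and D: "0 \<le> D" "D \<le> 1"
  shows "\<alpha> / (2 * \<alpha> - 1) * exp ((\<alpha> - 1) * D / b) + (\<alpha> - 1) / (2 * \<alpha> - 1) * exp (- \<alpha> * D / b)
    \<le> \<alpha> / (2 * \<alpha> - 1) * exp ((\<alpha> - 1) / b) + (\<alpha> - 1) / (2 * \<alpha> - 1) * exp (- \<alpha> / b)"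
proof -
  define h where "h t = \<alpha> * exp ((\<alpha> - 1) * t / b) + (\<alpha> - 1) * exp (- \<alpha> * t / b)" for t
  have "h D \<le> h 1"
  proof (rule DERIV_nonneg_imp_nondecreasing[OF D(2)])
    fix t assume t: "D \<le> t" "t \<le> 1"
    have "- \<alpha> * t \<le> (\<alpha> - 1) * t" using t D al by (intro mult_right_mono) auto
    then have "- \<alpha> * t / b \<le> (\<alpha> - 1) * t / b" using b by (intro divide_right_mono) auto
    then have "exp (- \<alpha> * t / b) \<le> exp ((\<alpha> - 1) * t / b)" by simp
    then have "0 \<le> \<alpha> * (\<alpha> - 1) / b * (exp ((\<alpha> - 1) * t / b) - exp (- \<alpha> * t / b))"
      using al b by (intro mult_nonneg_nonneg) auto
    moreover have "(h has_real_derivative \<alpha> * (\<alpha> - 1) / b * (exp ((\<alpha> - 1) * t / b) - exp (- \<alpha> * t / b))) (at t)"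
      unfolding h_def using b by (auto intro!: derivative_eq_intros simp: field_simps)
    ultimately show "\<exists>y. (h has_real_derivative y) (at t) \<and> 0 \<le> y" by blast
  qed
  then have "h D / (2 * \<alpha> - 1) \<le> h 1 / (2 * \<alpha> - 1)" using al by (intro divide_right_mono) auto
  then show ?thesis unfolding h_def by (simp add: add_divide_distrib)
qed


context mixB
begin

lemma fubini_B:
  fixes f :: "real \<Rightarrow> real \<Rightarrow> ennreal"
  assumes "(\<lambda>(x, b). f x b) \<in> borel_measurable (lborel \<Otimes>\<^sub>M B)"
  shows "(\<integral>\<^sup>+x. (\<integral>\<^sup>+b. f x b \<partial>B) \<partial>lborel) = (\<integral>\<^sup>+b. (\<integral>\<^sup>+x. f x b \<partial>lborel) \<partial>B)"
proof -
  interpret B: prob_space B by (rule PS)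
  interpret pair_sigma_finite lborel B
    by (simp add: pair_sigma_finite_def lborel.sigma_finite_measure_axioms B.sigma_finite_measure_axioms)
  show ?thesis using Fubini'[OF assms] by simp
qed

lemma P_meas: "(\<lambda>x. \<integral>b. lap_density b (x - a) \<partial>B) \<in> borel_measurable lborel"
proof -
  interpret B: prob_space B by (rule PS)
  show ?thesis by (rule B.borel_measurable_lebesgue_integral) (rule meas_pair[OF lap_meas])
qed

lemma mix_alpha_pt:
  assumes al: "1 < \<alpha>"
  shows "ennreal ((\<integral>b. lap_density b (x - a) \<partial>B) powr \<alpha> * (\<integral>b. lap_density b (x - c) \<partial>B) powr (1 - \<alpha>))
    \<le> (\<integral>\<^sup>+b. ennreal (lap_density b (x - a) powr \<alpha> * lap_density b (x - c) powr (1 - \<alpha>)) \<partial>B)"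
proof (cases "(\<integral>\<^sup>+b. ennreal (lap_density b (x - a) powr \<alpha> * lap_density b (x - c) powr (1 - \<alpha>)) \<partial>B) = \<infinity>")
  case True
  then show ?thesis by simp
next
  case False
  have meas: "(\<lambda>b. lap_density b (x - a) powr \<alpha> * lap_density b (x - c) powr (1 - \<alpha>)) \<in> borel_measurable B"
    by (rule meas_B) (unfold lap_density_def, measurable)
  have hi: "integrable B (\<lambda>b. lap_density b (x - a) powr \<alpha> * lap_density b (x - c) powr (1 - \<alpha>))"
  proof (rule integrableI_nonneg[OF meas])
    show "AE b in B. 0 \<le> lap_density b (x - a) powr \<alpha> * lap_density b (x - c) powr (1 - \<alpha>)" by simp
    show "(\<integral>\<^sup>+b. ennreal (lap_density b (x - a) powr \<alpha> * lap_density b (x - c) powr (1 - \<alpha>)) \<partial>B) < \<infinity>"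
      using False by (simp add: less_top[symmetric])
  qed
  have eq: "(\<integral>\<^sup>+b. ennreal (lap_density b (x - a) powr \<alpha> * lap_density b (x - c) powr (1 - \<alpha>)) \<partial>B)
      = ennreal (\<integral>b. lap_density b (x - a) powr \<alpha> * lap_density b (x - c) powr (1 - \<alpha>) \<partial>B)"
    by (rule nn_integral_eq_integral[OF hi]) simp
  have "(\<integral>b. lap_density b (x - a) \<partial>B) powr \<alpha> * (\<integral>b. lap_density b (x - c) \<partial>B) powr (1 - \<alpha>)
      \<le> (\<integral>b. lap_density b (x - a) powr \<alpha> * lap_density b (x - c) powr (1 - \<alpha>) \<partial>B)"
  proof (rule mix_powr[OF _ lap_integrable lap_integrable hi])
    show "1 \<le> \<alpha>" using al by simp
    show "AE b in B. 0 < lap_density b (x - a)" using POS by eventually_elim (rule lap_pos)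
    show "AE b in B. 0 < lap_density b (x - c)" using POS by eventually_elim (rule lap_pos)
  qed (rule P_pos)+
  then show ?thesis unfolding eq by (rule ennreal_leI)
qed

lemma exp_neg_integrable:
  assumes "0 \<le> s"
  shows "integrable B (\<lambda>b. exp (- s / b))"
proof -
  interpret prob_space B by (rule PS)
  show ?thesis
  proof (rule Bochner_Integration.integrable_bound[of B "\<lambda>_. 1"])
    show "integrable B (\<lambda>_. 1::real)" by simp
    show "(\<lambda>b. exp (- s / b)) \<in> borel_measurable B" by (rule meas_B) measurable
    show "AE b in B. norm (exp (- s / b)) \<le> norm (1::real)"
      using POS by eventually_elim (use assms in simp)
  qed
qed

lemma alpha_bound:
  assumes al: "1 < \<alpha>" and D: "\<bar>a - c\<bar> \<le> 1" and ei: "integrable B (\<lambda>b. exp ((\<alpha> - 1) / b))"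
  defines "F \<equiv> \<lambda>x. (\<integral>b. lap_density b (x - a) \<partial>B) powr \<alpha> * (\<integral>b. lap_density b (x - c) \<partial>B) powr (1 - \<alpha>)"
  shows "integrable lborel F \<and> 0 < integral\<^sup>L lborel F \<and>
    integral\<^sup>L lborel F \<le> (\<alpha> * mgf_inv B (\<alpha> - 1) + (\<alpha> - 1) * mgf_inv B (- \<alpha>)) / (2 * \<alpha> - 1)"
proof -
  define J where "J b = \<alpha> / (2 * \<alpha> - 1) * exp ((\<alpha> - 1) / b) + (\<alpha> - 1) / (2 * \<alpha> - 1) * exp (- \<alpha> / b)" for b
  have [measurable]: "(\<lambda>x. \<integral>b. lap_density b (x - a) \<partial>B) \<in> borel_measurable lborel"
    "(\<lambda>x. \<integral>b. lap_density b (x - c) \<partial>B) \<in> borel_measurable lborel" by (rule P_meas)+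
  have Fm: "F \<in> borel_measurable lborel" unfolding F_def by measurable
  have Ji: "integrable B J"
    unfolding J_def using ei exp_neg_integrable[of \<alpha>] al by simp
  have Jint: "integral\<^sup>L B J = (\<alpha> * mgf_inv B (\<alpha> - 1) + (\<alpha> - 1) * mgf_inv B (- \<alpha>)) / (2 * \<alpha> - 1)"
    unfolding J_def mgf_inv_def using ei exp_neg_integrable[of \<alpha>] al by (simp add: add_divide_distrib)
  have "(\<integral>\<^sup>+x. ennreal (F x) \<partial>lborel)
     \<le> (\<integral>\<^sup>+x. (\<integral>\<^sup>+b. ennreal (lap_density b (x - a) powr \<alpha> * lap_density b (x - c) powr (1 - \<alpha>)) \<partial>B) \<partial>lborel)"
    unfolding F_def by (intro nn_integral_mono mix_alpha_pt al)
  also have "\<dots> = (\<integral>\<^sup>+b. (\<integral>\<^sup>+x. ennreal (lap_density b (x - a) powr \<alpha> * lap_density b (x - c) powr (1 - \<alpha>)) \<partial>lborel) \<partial>B)"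
    by (rule fubini_B, rule meas_pair) (unfold lap_density_def, measurable)
  also have "\<dots> = (\<integral>\<^sup>+b. ennreal (\<alpha> / (2 * \<alpha> - 1) * exp ((\<alpha> - 1) * \<bar>a - c\<bar> / b) + (\<alpha> - 1) / (2 * \<alpha> - 1) * exp (- \<alpha> * \<bar>a - c\<bar> / b)) \<partial>B)"
  proof (rule nn_integral_cong_AE)
    show "AE b in B. (\<integral>\<^sup>+x. ennreal (lap_density b (x - a) powr \<alpha> * lap_density b (x - c) powr (1 - \<alpha>)) \<partial>lborel)
       = ennreal (\<alpha> / (2 * \<alpha> - 1) * exp ((\<alpha> - 1) * \<bar>a - c\<bar> / b) + (\<alpha> - 1) / (2 * \<alpha> - 1) * exp (- \<alpha> * \<bar>a - c\<bar> / b))"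
      using POS by eventually_elim (rule lap_alpha[OF _ al])
  qed
  also have "\<dots> \<le> (\<integral>\<^sup>+b. ennreal (J b) \<partial>B)"
  proof (rule nn_integral_mono_AE)
    show "AE b in B. ennreal (\<alpha> / (2 * \<alpha> - 1) * exp ((\<alpha> - 1) * \<bar>a - c\<bar> / b) + (\<alpha> - 1) / (2 * \<alpha> - 1) * exp (- \<alpha> * \<bar>a - c\<bar> / b))
       \<le> ennreal (J b)"
      using POS unfolding J_def by eventually_elim (rule ennreal_leI, rule J_mono[OF al _ abs_ge_zero D])
  qed
  also have "\<dots> = ennreal (integral\<^sup>L B J)"
    by (rule nn_integral_eq_integral[OF Ji]) (use al in \<open>auto simp: J_def\<close>)
  finally have nnF: "(\<integral>\<^sup>+x. ennreal (F x) \<partial>lborel) \<le> ennreal (integral\<^sup>L B J)" .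
  have Fnn: "0 \<le> F x" for x unfolding F_def by simp
  have Fi: "integrable lborel F"
  proof (rule integrableI_nonneg[OF Fm])
    show "AE x in lborel. 0 \<le> F x" using Fnn by simp
    show "(\<integral>\<^sup>+x. ennreal (F x) \<partial>lborel) < \<infinity>" using le_less_trans[OF nnF] by simp
  qed
  have "ennreal (integral\<^sup>L lborel F) \<le> ennreal (integral\<^sup>L B J)"
    using nnF nn_integral_eq_integral[OF Fi] Fnn by simp
  moreover have "0 \<le> integral\<^sup>L B J" using Bochner_Integration.integral_nonneg[where M=B and f=J] al by (simp add: J_def)
  ultimately have le: "integral\<^sup>L lborel F \<le> integral\<^sup>L B J" by (simp add: ennreal_le_iff)
  have Fpos: "0 < F x" for x unfolding F_def using P_pos[of "x - a"] P_pos[of "x - c"] by simp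
  have "integral\<^sup>L lborel F \<noteq> 0"
  proof
    assume "integral\<^sup>L lborel F = 0"
    then have "AE x in lborel. F x = 0" using integral_nonneg_eq_0_iff_AE[OF Fi] Fnn by simp
    then have "AE x::real in lborel. False" by (rule eventually_mono) (metis Fpos less_irrefl)
    then show False by (simp add: eventually_False ae_filter_eq_bot_iff)
  qed
  moreover have "0 \<le> integral\<^sup>L lborel F" using Fnn by (simp add: Bochner_Integration.integral_nonneg)
  ultimately have "0 < integral\<^sup>L lborel F" by simp
  with Fi le Jint show ?thesis by simp
qed

end




lemma K_mono:
  fixes b D :: real assumes b: "0 < b" and D: "0 \<le> D" "D \<le> 1"
  shows "D / b + exp (- D / b) - 1 \<le> 1 / b + exp (- 1 / b) - 1"
proof -
  define h where "h t = t / b + exp (- t / b)" for t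
  have "h D \<le> h 1"
  proof (rule DERIV_nonneg_imp_nondecreasing[OF D(2)])
    fix t assume t: "D \<le> t" "t \<le> 1"
    have "- t / b \<le> 0" using t D b by simp
    then have "exp (- t / b) \<le> 1" by simp
    then have "0 \<le> (1 - exp (- t / b)) / b" using b by simp
    moreover have "(h has_real_derivative (1 - exp (- t / b)) / b) (at t)"
      unfolding h_def using b by (auto intro!: derivative_eq_intros simp: field_simps)
    ultimately show "\<exists>y. (h has_real_derivative y) (at t) \<and> 0 \<le> y" by blast
  qed
  then show ?thesis unfolding h_def by simp
qed

context mixB begin

lemma mix_kl_pt:
  shows "ennreal ((\<integral>b. lap_density b (x - a) \<partial>B) * ln ((\<integral>b. lap_density b (x - a) \<partial>B) / (\<integral>b. lap_density b (x - c) \<partial>B))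
      - (\<integral>b. lap_density b (x - a) \<partial>B) + (\<integral>b. lap_density b (x - c) \<partial>B))
    \<le> (\<integral>\<^sup>+b. ennreal (lap_density b (x - a) * ln (lap_density b (x - a) / lap_density b (x - c))
      - lap_density b (x - a) + lap_density b (x - c)) \<partial>B)"
    (is "ennreal ?L \<le> ?R")
proof (cases "?R = \<infinity>")
  case True
  then show ?thesis by simp
next
  case False
  define g where "g b = lap_density b (x - a) * ln (lap_density b (x - a) / lap_density b (x - c))
      - lap_density b (x - a) + lap_density b (x - c)" for b
  have meas: "g \<in> borel_measurable B"
    unfolding g_def by (rule meas_B) (unfold lap_density_def, measurable)
  have gnn: "AE b in B. 0 \<le> g b"
    using POS by eventually_elim (unfold g_def, intro kl_elem lap_pos)
  have gi: "integrable B g"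
  proof (rule integrableI_nonneg[OF meas gnn])
    show "(\<integral>\<^sup>+b. ennreal (g b) \<partial>B) < \<infinity>"
      using False unfolding g_def by (simp add: less_top[symmetric])
  qed
  have eq: "?R = ennreal (integral\<^sup>L B g)"
    unfolding g_def[symmetric] by (rule nn_integral_eq_integral[OF gi gnn])
  have hi0: "integrable B (\<lambda>b. g b + lap_density b (x - a) - lap_density b (x - c))"
    by (intro Bochner_Integration.integrable_diff Bochner_Integration.integrable_add gi lap_integrable)
  have hfun: "(\<lambda>b. g b + lap_density b (x - a) - lap_density b (x - c))
      = (\<lambda>b. lap_density b (x - a) * ln (lap_density b (x - a) / lap_density b (x - c)))"
    by (simp add: g_def)
  have hi: "integrable B (\<lambda>b. lap_density b (x - a) * ln (lap_density b (x - a) / lap_density b (x - c)))"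
    using hi0 unfolding hfun .
  have hint: "(\<integral>b. lap_density b (x - a) * ln (lap_density b (x - a) / lap_density b (x - c)) \<partial>B)
      = integral\<^sup>L B g + (\<integral>b. lap_density b (x - a) \<partial>B) - (\<integral>b. lap_density b (x - c) \<partial>B)"
    unfolding hfun[symmetric] using gi lap_integrable by simp
  have "(\<integral>b. lap_density b (x - a) \<partial>B) * ln ((\<integral>b. lap_density b (x - a) \<partial>B) / (\<integral>b. lap_density b (x - c) \<partial>B))
      \<le> (\<integral>b. lap_density b (x - a) * ln (lap_density b (x - a) / lap_density b (x - c)) \<partial>B)"
  proof (rule mix_kl[OF lap_integrable lap_integrable hi])
    show "AE b in B. 0 < lap_density b (x - a)" using POS by eventually_elim (rule lap_pos)
    show "AE b in B. 0 < lap_density b (x - c)" using POS by eventually_elim (rule lap_pos)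
  qed (rule P_pos)+
  then have "?L \<le> integral\<^sup>L B g" unfolding hint by simp
  then show ?thesis unfolding eq by (rule ennreal_leI)
qed

lemma P_lborel:
  shows "integrable lborel (\<lambda>x. \<integral>b. lap_density b (x - a) \<partial>B) \<and> (\<integral>x. (\<integral>b. lap_density b (x - a) \<partial>B) \<partial>lborel) = 1"
proof -
  interpret prob_space B by (rule PS)
  have Pm: "(\<lambda>x. \<integral>b. lap_density b (x - a) \<partial>B) \<in> borel_measurable lborel" by (rule P_meas)
  have Pnn: "0 \<le> (\<integral>b. lap_density b (x - a) \<partial>B)" for x using P_pos[of "x - a"] by simp
  have lnn: "AE b in B. 0 \<le> lap_density b y" for y using POS by eventually_elim (simp add: less_imp_le lap_pos)
  have "(\<integral>\<^sup>+x. ennreal (\<integral>b. lap_density b (x - a) \<partial>B) \<partial>lborel)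
      = (\<integral>\<^sup>+x. (\<integral>\<^sup>+b. ennreal (lap_density b (x - a)) \<partial>B) \<partial>lborel)"
    by (intro nn_integral_cong nn_integral_eq_integral[OF lap_integrable lnn, symmetric])
  also have "\<dots> = (\<integral>\<^sup>+b. (\<integral>\<^sup>+x. ennreal (lap_density b (x - a)) \<partial>lborel) \<partial>B)"
    by (rule fubini_B, rule meas_pair) (unfold lap_density_def, measurable)
  also have "\<dots> = (\<integral>\<^sup>+b. 1 \<partial>B)"
  proof (rule nn_integral_cong_AE)
    show "AE b in B. (\<integral>\<^sup>+x. ennreal (lap_density b (x - a)) \<partial>lborel) = 1"
      using POS by eventually_elim (rule lap_mass)
  qed
  also have "\<dots> = 1" by (simp add: emeasure_space_1)
  finally have nn: "(\<integral>\<^sup>+x. ennreal (\<integral>b. lap_density b (x - a) \<partial>B) \<partial>lborel) = 1" .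
  have Pi: "integrable lborel (\<lambda>x. \<integral>b. lap_density b (x - a) \<partial>B)"
    by (rule integrableI_nonneg[OF Pm]) (use Pnn nn in simp_all)
  have "ennreal (\<integral>x. (\<integral>b. lap_density b (x - a) \<partial>B) \<partial>lborel) = 1"
    using nn_integral_eq_integral[OF Pi] Pnn nn by simp
  then have "(\<integral>x. (\<integral>b. lap_density b (x - a) \<partial>B) \<partial>lborel) = 1"
    by (metis ennreal_1 ennreal_inj Bochner_Integration.integral_nonneg Pnn zero_le_one)
  with Pi show ?thesis by simp
qed

lemma kl_bound:
  assumes D: "\<bar>a - c\<bar> \<le> 1"
  defines "P \<equiv> \<lambda>x. \<integral>b. lap_density b (x - a) \<partial>B"
  defines "Q \<equiv> \<lambda>x. \<integral>b. lap_density b (x - c) \<partial>B"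
  shows "integrable lborel (\<lambda>x. P x * ln (P x / Q x)) \<and>
    (\<integral>x. P x * ln (P x / Q x) \<partial>lborel) \<le> (\<integral>b. 1 / b \<partial>B) + mgf_inv B (- 1) - 1"
proof -
  interpret prob_space B by (rule PS)
  define G where "G x = P x * ln (P x / Q x) - P x + Q x" for x
  define K :: "real \<Rightarrow> real" where "K b = 1 / b + exp (- 1 / b) - 1" for b
  have [measurable]: "P \<in> borel_measurable lborel" "Q \<in> borel_measurable lborel"
    unfolding P_def Q_def by (rule P_meas)+
  have Gm: "G \<in> borel_measurable lborel" unfolding G_def by measurable
  have Ppos: "0 < P x" for x unfolding P_def by (rule P_pos)
  have Qpos: "0 < Q x" for x unfolding Q_def by (rule P_pos)
  have Gnn: "0 \<le> G x" for x unfolding G_def by (rule kl_elem[OF Ppos Qpos])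
  have Ki: "integrable B K"
    unfolding K_def using inv_integrable exp_neg_integrable[of 1] by simp
  have Kint: "integral\<^sup>L B K = (\<integral>b. 1 / b \<partial>B) + mgf_inv B (- 1) - 1"
    unfolding K_def mgf_inv_def using inv_integrable exp_neg_integrable[of 1] by (simp add: prob_space)
  have Knn: "AE b in B. 0 \<le> K b"
    using POS
  proof eventually_elim
    case (elim b)
    have "1 + (- 1 / b) \<le> exp (- 1 / b)" by (rule exp_ge_add_one_self)
    then show ?case unfolding K_def by simp
  qed
  have "(\<integral>\<^sup>+x. ennreal (G x) \<partial>lborel)
     \<le> (\<integral>\<^sup>+x. (\<integral>\<^sup>+b. ennreal (lap_density b (x - a) * ln (lap_density b (x - a) / lap_density b (x - c))
      - lap_density b (x - a) + lap_density b (x - c)) \<partial>B) \<partial>lborel)"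
    unfolding G_def P_def Q_def by (intro nn_integral_mono mix_kl_pt)
  also have "\<dots> = (\<integral>\<^sup>+b. (\<integral>\<^sup>+x. ennreal (lap_density b (x - a) * ln (lap_density b (x - a) / lap_density b (x - c))
      - lap_density b (x - a) + lap_density b (x - c)) \<partial>lborel) \<partial>B)"
    by (rule fubini_B, rule meas_pair) (unfold lap_density_def, measurable)
  also have "\<dots> = (\<integral>\<^sup>+b. ennreal (\<bar>a - c\<bar> / b + exp (- \<bar>a - c\<bar> / b) - 1) \<partial>B)"
  proof (rule nn_integral_cong_AE)
    show "AE b in B. (\<integral>\<^sup>+x. ennreal (lap_density b (x - a) * ln (lap_density b (x - a) / lap_density b (x - c))
      - lap_density b (x - a) + lap_density b (x - c)) \<partial>lborel) = ennreal (\<bar>a - c\<bar> / b + exp (- \<bar>a - c\<bar> / b) - 1)"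
      using POS by eventually_elim (rule lap_kl)
  qed
  also have "\<dots> \<le> (\<integral>\<^sup>+b. ennreal (K b) \<partial>B)"
  proof (rule nn_integral_mono_AE)
    show "AE b in B. ennreal (\<bar>a - c\<bar> / b + exp (- \<bar>a - c\<bar> / b) - 1) \<le> ennreal (K b)"
      using POS unfolding K_def by eventually_elim (rule ennreal_leI, rule K_mono[OF _ abs_ge_zero D])
  qed
  also have "\<dots> = ennreal (integral\<^sup>L B K)"
    by (rule nn_integral_eq_integral[OF Ki Knn])
  finally have nnG: "(\<integral>\<^sup>+x. ennreal (G x) \<partial>lborel) \<le> ennreal (integral\<^sup>L B K)" .
  have Gi: "integrable lborel G"
  proof (rule integrableI_nonneg[OF Gm])
    show "AE x in lborel. 0 \<le> G x" using Gnn by simp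
    show "(\<integral>\<^sup>+x. ennreal (G x) \<partial>lborel) < \<infinity>" using le_less_trans[OF nnG] by simp
  qed
  have "ennreal (integral\<^sup>L lborel G) \<le> ennreal (integral\<^sup>L B K)"
    using nnG nn_integral_eq_integral[OF Gi] Gnn by simp
  moreover have "0 \<le> integral\<^sup>L B K" using integral_nonneg_AE[OF Knn] .
  ultimately have le: "integral\<^sup>L lborel G \<le> integral\<^sup>L B K" by (simp add: ennreal_le_iff)
  have Pi: "integrable lborel P" and P1: "integral\<^sup>L lborel P = 1" using P_lborel[of a] unfolding P_def by auto
  have Qi: "integrable lborel Q" and Q1: "integral\<^sup>L lborel Q = 1" using P_lborel[of c] unfolding Q_def by auto
  have hfun: "(\<lambda>x. G x + P x - Q x) = (\<lambda>x. P x * ln (P x / Q x))" by (simp add: G_def)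
  have hi0: "integrable lborel (\<lambda>x. G x + P x - Q x)"
    by (intro Bochner_Integration.integrable_diff Bochner_Integration.integrable_add Gi Pi Qi)
  have hi: "integrable lborel (\<lambda>x. P x * ln (P x / Q x))" using hi0 unfolding hfun .
  have "(\<integral>x. P x * ln (P x / Q x) \<partial>lborel) = integral\<^sup>L lborel G + integral\<^sup>L lborel P - integral\<^sup>L lborel Q"
    unfolding hfun[symmetric] using Gi Pi Qi by simp
  also have "\<dots> = integral\<^sup>L lborel G" using P1 Q1 by simp
  finally show ?thesis using hi le Kint by simp
qed

end




lemma exp_diff_bound:
  fixes v :: real
  shows "\<bar>exp v - 1\<bar> \<le> \<bar>v\<bar> * exp \<bar>v\<bar>"
proof (cases "0 \<le> v")
  case True
  have "1 + (- v) \<le> exp (- v)" by (rule exp_ge_add_one_self)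
  then have "exp v * (1 - v) \<le> exp v * exp (- v)" by (intro mult_left_mono) auto
  also have "\<dots> = 1" by (simp add: exp_minus)
  finally have "exp v - 1 \<le> v * exp v" by (simp add: algebra_simps)
  moreover have "1 \<le> exp v" using True by simp
  ultimately show ?thesis using True by simp
next
  case False
  have "1 + v \<le> exp v" by (rule exp_ge_add_one_self)
  then have h1: "1 - exp v \<le> - v" by linarith
  have "exp v \<le> 1" using False by simp
  then have "\<bar>exp v - 1\<bar> = 1 - exp v" by simp
  moreover have "\<bar>v\<bar> = - v" using False by simp
  ultimately have "\<bar>exp v - 1\<bar> \<le> \<bar>v\<bar> * 1" using h1 by simp
  also have "\<dots> \<le> \<bar>v\<bar> * exp \<bar>v\<bar>" by (intro mult_left_mono) auto
  finally show ?thesis .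
qed

context mixB begin

lemma mgf_deriv: "deriv (mgf_inv B) 0 = (\<integral>b. 1 / b \<partial>B)"
proof -
  interpret prob_space B by (rule PS)
  obtain \<delta> where \<delta>: "\<delta> > 0" "\<And>t. \<bar>t\<bar> < \<delta> \<Longrightarrow> integrable B (\<lambda>b. exp (t / b))" using MGF by auto
  define \<eta> where "\<eta> = \<delta> / 4"
  have \<eta>: "0 < \<eta>" "\<eta> < \<delta>" "2 * \<eta> < \<delta>" using \<delta> by (auto simp: \<eta>_def)
  define w where "w b = exp ((2 * \<eta>) / b) / \<eta>" for b
  have wi: "integrable B w" unfolding w_def using \<delta>(2)[of "2 * \<eta>"] \<eta> by simp
  have M0: "mgf_inv B 0 = 1" by (simp add: mgf_inv_def prob_space)
  have quot: "(mgf_inv B t - mgf_inv B 0) / (t - 0) = (\<integral>b. (exp (t / b) - 1) / t \<partial>B)" if "\<bar>t\<bar> < \<delta>" for t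
  proof -
    have "mgf_inv B t - mgf_inv B 0 = (\<integral>b. exp (t / b) - 1 \<partial>B)"
      unfolding M0 unfolding mgf_inv_def using \<delta>(2)[OF that] by (simp add: prob_space)
    then show ?thesis by simp
  qed
  have bound: "AE b in B. \<forall>t. \<bar>t\<bar> \<le> \<eta> \<longrightarrow> \<bar>(exp (t / b) - 1) / t\<bar> \<le> w b"
    using POS
  proof eventually_elim
    case (elim b)
    show ?case
    proof (intro allI impI)
      fix t :: real assume t: "\<bar>t\<bar> \<le> \<eta>"
      show "\<bar>(exp (t / b) - 1) / t\<bar> \<le> w b"
      proof (cases "t = 0")
        case True
        then show ?thesis unfolding w_def using \<eta> by simp
      next
        case False
        have "\<bar>exp (t / b) - 1\<bar> \<le> \<bar>t / b\<bar> * exp \<bar>t / b\<bar>" by (rule exp_diff_bound)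
        also have "\<bar>t / b\<bar> = \<bar>t\<bar> / b" using elim by simp
        finally have "\<bar>(exp (t / b) - 1) / t\<bar> \<le> exp (\<bar>t\<bar> / b) / b"
          using False elim by (simp add: abs_divide field_simps)
        also have "exp (\<bar>t\<bar> / b) \<le> exp (\<eta> / b)" using t elim by (simp add: divide_right_mono)
        then have "exp (\<bar>t\<bar> / b) / b \<le> exp (\<eta> / b) / b" using elim by (simp add: divide_right_mono)
        also have "1 / b \<le> exp (\<eta> / b) / \<eta>"
        proof -
          have "\<eta> / b \<le> exp (\<eta> / b)" using exp_ge_add_one_self[of "\<eta> / b"] by linarith
          then show ?thesis using \<eta> elim by (simp add: field_simps)
        qed
        then have "exp (\<eta> / b) / b \<le> exp (\<eta> / b) * (exp (\<eta> / b) / \<eta>)"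
          by (metis divide_inverse exp_gt_zero mult.commute mult_left_mono nless_le inverse_eq_divide)
        also have "\<dots> = w b" unfolding w_def by (simp add: exp_add[symmetric] add_divide_distrib)
        finally show ?thesis .
      qed
    qed
  qed
  have lim_pt: "((\<lambda>t. (exp (t / b) - 1) / t) \<longlongrightarrow> 1 / b) (at 0)" if "0 < b" for b :: real
  proof -
    have "((\<lambda>t. exp (t / b)) has_field_derivative 1 / b) (at 0)"
      using that by (auto intro!: derivative_eq_intros)
    then show ?thesis unfolding has_field_derivative_iff by simp
  qed
  have "(mgf_inv B has_field_derivative (\<integral>b. 1 / b \<partial>B)) (at 0)"
    unfolding has_field_derivative_iff tendsto_at_iff_sequentially
  proof (intro allI impI)
    fix X :: "nat \<Rightarrow> real"
    assume X0: "\<forall>i. X i \<in> UNIV - {0}" and Xl: "X \<longlonglongrightarrow> 0"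
    define Y where "Y i = (if \<bar>X i\<bar> \<le> \<eta> then X i else \<eta>)" for i
    have Ynz: "Y i \<noteq> 0" for i using X0 \<eta> by (auto simp: Y_def)
    have Ysm: "\<bar>Y i\<bar> \<le> \<eta>" for i using \<eta> by (auto simp: Y_def)
    have ev: "eventually (\<lambda>i. Y i = X i) sequentially"
    proof -
      have "eventually (\<lambda>i. dist (X i) 0 < \<eta>) sequentially" using Xl \<eta> by (simp add: tendsto_iff)
      then show ?thesis by eventually_elim (simp add: Y_def)
    qed
    have Yl: "Y \<longlonglongrightarrow> 0" using tendsto_cong[OF ev] Xl by simp
    have Yat: "filterlim Y (at 0) sequentially"
      by (rule filterlim_atI[OF Yl]) (simp add: Ynz)
    have "(\<lambda>i. \<integral>b. (exp (Y i / b) - 1) / Y i \<partial>B) \<longlonglongrightarrow> (\<integral>b. 1 / b \<partial>B)"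
    proof (rule integral_dominated_convergence[where w=w])
      show "(\<lambda>b. 1 / b) \<in> borel_measurable B" by (rule meas_B) measurable
      show "(\<lambda>b. (exp (Y i / b) - 1) / Y i) \<in> borel_measurable B" for i by (rule meas_B) measurable
      show "integrable B w" by (rule wi)
      show "AE b in B. (\<lambda>i. (exp (Y i / b) - 1) / Y i) \<longlonglongrightarrow> 1 / b"
        using POS by eventually_elim (rule filterlim_compose[OF lim_pt Yat])
      show "AE b in B. norm ((exp (Y i / b) - 1) / Y i) \<le> w b" for i
        using bound by eventually_elim (simp add: Ysm)
    qed
    moreover have "(\<lambda>i. (mgf_inv B (Y i) - mgf_inv B 0) / (Y i - 0)) = (\<lambda>i. \<integral>b. (exp (Y i / b) - 1) / Y i \<partial>B)"
    proof (rule ext, rule quot)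
      fix i show "\<bar>Y i\<bar> < \<delta>" using Ysm[of i] \<eta> by linarith
    qed
    ultimately have YL: "(\<lambda>i. (mgf_inv B (Y i) - mgf_inv B 0) / (Y i - 0)) \<longlonglongrightarrow> (\<integral>b. 1 / b \<partial>B)"
      by simp
    have EV: "eventually (\<lambda>i. (mgf_inv B (Y i) - mgf_inv B 0) / (Y i - 0)
        = ((\<lambda>y. (mgf_inv B y - mgf_inv B 0) / (y - 0)) \<circ> X) i) sequentially"
      using ev by eventually_elim simp
    show "((\<lambda>y. (mgf_inv B y - mgf_inv B 0) / (y - 0)) \<circ> X) \<longlonglongrightarrow> (\<integral>b. 1 / b \<partial>B)"
      using tendsto_cong[OF EV] YL by (simp add: o_def)
  qed
  then show ?thesis by (rule DERIV_imp_deriv)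
qed

end



theorem theoremF3:
  fixes B :: "real measure" and q :: "'d \<Rightarrow> real" and adj :: "'d \<Rightarrow> 'd \<Rightarrow> bool"
  assumes "prob_space B" and "sets B = sets borel"
    and "AE b in B. 0 < b"
    and "\<exists>\<delta>>0. \<forall>t. \<bar>t\<bar> < \<delta> \<longrightarrow> integrable B (\<lambda>b. exp (t / b))"
    and "has_sensitivity adj q 1"
  shows "(\<forall>\<alpha>>1. integrable B (\<lambda>b. exp ((\<alpha> - 1) / b)) \<longrightarrow>
            is_rdp adj (r2dp_laplace_density B q) \<alpha>
              (1 / (\<alpha> - 1) * ln ((\<alpha> * mgf_inv B (\<alpha> - 1) + (\<alpha> - 1) * mgf_inv B (- \<alpha>))
                                   / (2 * \<alpha> - 1))))
       \<and> is_rdp adj (r2dp_laplace_density B q) 1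
           (deriv (mgf_inv B) 0 + mgf_inv B (- 1) - 1)"
proof -
  interpret mixB B by (rule mixB.intro[OF assms(1-4)])
  have sens: "\<bar>q d - q d'\<bar> \<le> 1" if "adj d d'" for d d'
    using assms(5) that unfolding has_sensitivity_def by blast
  have part1: "\<forall>\<alpha>>1. integrable B (\<lambda>b. exp ((\<alpha> - 1) / b)) \<longrightarrow>
            is_rdp adj (r2dp_laplace_density B q) \<alpha>
              (1 / (\<alpha> - 1) * ln ((\<alpha> * mgf_inv B (\<alpha> - 1) + (\<alpha> - 1) * mgf_inv B (- \<alpha>))
                                   / (2 * \<alpha> - 1)))"
  proof (intro allI impI)
    fix \<alpha> :: real assume al: "1 < \<alpha>" and ei: "integrable B (\<lambda>b. exp ((\<alpha> - 1) / b))"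
    show "is_rdp adj (r2dp_laplace_density B q) \<alpha>
              (1 / (\<alpha> - 1) * ln ((\<alpha> * mgf_inv B (\<alpha> - 1) + (\<alpha> - 1) * mgf_inv B (- \<alpha>))
                                   / (2 * \<alpha> - 1)))"
      unfolding is_rdp_def
    proof (intro allI impI)
      fix d d' assume "adj d d'"
      then have D: "\<bar>q d - q d'\<bar> \<le> 1" by (rule sens)
      define F where "F x = (\<integral>b. lap_density b (x - q d) \<partial>B) powr \<alpha> * (\<integral>b. lap_density b (x - q d') \<partial>B) powr (1 - \<alpha>)" for x
      have ab: "integrable lborel F \<and> 0 < integral\<^sup>L lborel F \<and>
          integral\<^sup>L lborel F \<le> (\<alpha> * mgf_inv B (\<alpha> - 1) + (\<alpha> - 1) * mgf_inv B (- \<alpha>)) / (2 * \<alpha> - 1)"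
        unfolding F_def by (rule alpha_bound[OF al D ei])
      have Fe: "(\<lambda>x. r2dp_laplace_density B q d x powr \<alpha> * r2dp_laplace_density B q d' x powr (1 - \<alpha>)) = F"
        by (simp add: F_def r2dp_laplace_density_def fun_eq_iff)
      have "ln (integral\<^sup>L lborel F) \<le> ln ((\<alpha> * mgf_inv B (\<alpha> - 1) + (\<alpha> - 1) * mgf_inv B (- \<alpha>)) / (2 * \<alpha> - 1))"
        using ab by (intro ln_mono) auto
      then have "1 / (\<alpha> - 1) * ln (integral\<^sup>L lborel F) \<le> 1 / (\<alpha> - 1) * ln ((\<alpha> * mgf_inv B (\<alpha> - 1) + (\<alpha> - 1) * mgf_inv B (- \<alpha>)) / (2 * \<alpha> - 1))"
        using al by (intro mult_left_mono) auto
      then show "renyi_div \<alpha> (r2dp_laplace_density B q d) (r2dp_laplace_density B q d')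
          \<le> ereal (1 / (\<alpha> - 1) * ln ((\<alpha> * mgf_inv B (\<alpha> - 1) + (\<alpha> - 1) * mgf_inv B (- \<alpha>)) / (2 * \<alpha> - 1)))"
        unfolding renyi_div_def Fe using al ab by simp
    qed
  qed
  have part2: "is_rdp adj (r2dp_laplace_density B q) 1 (deriv (mgf_inv B) 0 + mgf_inv B (- 1) - 1)"
    unfolding is_rdp_def
  proof (intro allI impI)
    fix d d' assume "adj d d'"
    then have D: "\<bar>q d - q d'\<bar> \<le> 1" by (rule sens)
    define P where "P x = (\<integral>b. lap_density b (x - q d) \<partial>B)" for x
    define Q where "Q x = (\<integral>b. lap_density b (x - q d') \<partial>B)" for x
    have kb: "integrable lborel (\<lambda>x. P x * ln (P x / Q x)) \<and>
        (\<integral>x. P x * ln (P x / Q x) \<partial>lborel) \<le> (\<integral>b. 1 / b \<partial>B) + mgf_inv B (- 1) - 1"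
      unfolding P_def Q_def by (rule kl_bound[OF D])
    have Pe: "r2dp_laplace_density B q d = P" "r2dp_laplace_density B q d' = Q"
      by (simp_all add: P_def Q_def r2dp_laplace_density_def fun_eq_iff)
    show "renyi_div 1 (r2dp_laplace_density B q d) (r2dp_laplace_density B q d')
        \<le> ereal (deriv (mgf_inv B) 0 + mgf_inv B (- 1) - 1)"
      unfolding renyi_div_def Pe mgf_deriv using kb by simp
  qed
  show ?thesis using part1 part2 by blast
qed

end
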